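(* If $J$ is a subcomplex of a simplicial complex $K$ which is flag and full in $K$, then $J$ is a 3-convex subcomplex of $K'_J$. In particular, if $J$ is a full subcomplex of a flag complex $K$, then $J$ is 3-convex in $K'_J$.
   Context: $K'_J$ (barycentric subdivision of $K$ relative to $J$): vertices are vertices of $J$ and barycenters $b(\sigma)$ of simplices $\sigma$ of $K$ not in $J$; simplices are spanned by sets $\{v_1,\dots,v_q,b(\sigma_1),\dots,b(\sigma_p)\}$ with $v_1,\dots,v_q$ spanning a simplex $\tau$ of $J$ (possibly empty), $\sigma_i\not\subset J$, and $\tau\subset\sigma_1\subset\dots\subset\sigma_p$. A subcomplex $J\subset L$ is 3-convex if it is full and for any two vertices of $J$ at edge-path distance 2 in $L$, every edge path of length 2 in $L$ joining them lies in $J$. *)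

theory Defs
  imports Main
begin

definition simplicial_complex :: "'a set set \<Rightarrow> bool" where
  "simplicial_complex K \<longleftrightarrow>
     (\<forall>s\<in>K. finite s \<and> s \<noteq> {}) \<and> (\<forall>s\<in>K. \<forall>t. t \<subseteq> s \<and> t \<noteq> {} \<longrightarrow> t \<in> K)"

definition vertices :: "'a set set \<Rightarrow> 'a set" where
  "vertices K = \<Union>K"

definition subcomplex :: "'a set set \<Rightarrow> 'a set set \<Rightarrow> bool" where
  "subcomplex J K \<longleftrightarrow> simplicial_complex J \<and> J \<subseteq> K"

definition full_in :: "'a set set \<Rightarrow> 'a set set \<Rightarrow> bool" where
  "full_in J K \<longleftrightarrow> (\<forall>s\<in>K. s \<subseteq> vertices J \<longrightarrow> s \<in> J)"

definition flag :: "'a set set \<Rightarrow> bool" where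
  "flag K \<longleftrightarrow> (\<forall>s. finite s \<and> s \<noteq> {} \<and> s \<subseteq> vertices K \<and>
      (\<forall>x\<in>s. \<forall>y\<in>s. x \<noteq> y \<longrightarrow> {x, y} \<in> K) \<longrightarrow> s \<in> K)"

text \<open>A vertex v of J is represented by
  Inl v, the barycenter b(sigma) of a simplex sigma of K not in J by Inr sigma.\<close>
definition rel_barycentric :: "'a set set \<Rightarrow> 'a set set \<Rightarrow> ('a + 'a set) set set" where
  "rel_barycentric K J =
     {Inl ` \<tau> \<union> Inr ` S | \<tau> S.
        (\<tau> = {} \<or> \<tau> \<in> J) \<and> finite S \<and> S \<subseteq> K - J \<and>
        (\<forall>\<sigma>\<in>S. \<tau> \<subseteq> \<sigma>) \<and>
        (\<forall>\<sigma>1\<in>S. \<forall>\<sigma>2\<in>S. \<sigma>1 \<subseteq> \<sigma>2 \<or> \<sigma>2 \<subseteq> \<sigma>1) \<and>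
        (\<tau> \<noteq> {} \<or> S \<noteq> {})}"

definition embed_J :: "'a set set \<Rightarrow> ('a + 'a set) set set" where
  "embed_J J = (\<lambda>s. Inl ` s) ` J"

definition is_edge :: "'b set set \<Rightarrow> 'b \<Rightarrow> 'b \<Rightarrow> bool" where
  "is_edge L x y \<longleftrightarrow> x \<noteq> y \<and> {x, y} \<in> L"

definition dist2 :: "'b set set \<Rightarrow> 'b \<Rightarrow> 'b \<Rightarrow> bool" where
  "dist2 L u v \<longleftrightarrow> u \<noteq> v \<and> \<not> is_edge L u v \<and> (\<exists>w. is_edge L u w \<and> is_edge L w v)"

definition three_convex :: "'b set set \<Rightarrow> 'b set set \<Rightarrow> bool" where
  "three_convex J L \<longleftrightarrow> subcomplex J L \<and> full_in J L \<and>
     (\<forall>u\<in>vertices J. \<forall>v\<in>vertices J. dist2 L u v \<longrightarrow>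
        (\<forall>w. is_edge L u w \<and> is_edge L w v \<longrightarrow> {u, w} \<in> J \<and> {w, v} \<in> J))"

end

theory Submission imports Defs begin
lemma rb_elim:
  assumes "s \<in> rel_barycentric K J"
  obtains \<tau> S where "s = Inl ` \<tau> \<union> Inr ` S" "\<tau> = {} \<or> \<tau> \<in> J" "finite S" "S \<subseteq> K - J"
     "\<forall>\<sigma>\<in>S. \<tau> \<subseteq> \<sigma>" "\<tau> \<noteq> {} \<or> S \<noteq> {}"
  using assms unfolding rel_barycentric_def mem_Collect_eq by metis

lemma edge_LL:
  assumes "{Inl x, Inl z} \<in> rel_barycentric K J"
  shows "{x, z} \<in> J"
proof -
  obtain \<tau> S where eq: "{Inl x, Inl z} = Inl ` \<tau> \<union> Inr ` S"
    and h: "\<tau> = {} \<or> \<tau> \<in> J" "finite S" "S \<subseteq> K - J"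
     "\<forall>\<sigma>\<in>S. \<tau> \<subseteq> \<sigma>" "\<tau> \<noteq> {} \<or> S \<noteq> {}"
    using assms by (rule rb_elim)
  have "S = {}"
  proof (rule equals0I)
    fix s assume "s \<in> S"
    hence "Inr s \<in> Inl ` \<tau> \<union> Inr ` S" by simp
    hence "Inr s \<in> {Inl x, Inl z}" by (simp only: eq)
    thus False by simp
  qed
  hence eq2: "{Inl x, Inl z} = (Inl ` \<tau> :: ('a + 'a set) set)" using eq by simp
  have "\<tau> = {x, z}"
  proof (rule set_eqI)
    fix a
    have "a \<in> \<tau> \<longleftrightarrow> Inl a \<in> (Inl ` \<tau> :: ('a + 'a set) set)" by (simp add: inj_image_mem_iff)
    also have "\<dots> \<longleftrightarrow> Inl a \<in> ({Inl x, Inl z} :: ('a + 'a set) set)" by (simp only: eq2[symmetric])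
    also have "\<dots> \<longleftrightarrow> a \<in> {x, z}" by simp
    finally show "a \<in> \<tau> \<longleftrightarrow> a \<in> {x, z}" .
  qed
  thus ?thesis using h(1) by simp
qed

lemma edge_LR:
  assumes "{Inl x, Inr \<sigma>} \<in> rel_barycentric K J"
  shows "x \<in> \<sigma> \<and> \<sigma> \<in> K"
proof -
  obtain \<tau> S where eq: "{Inl x, Inr \<sigma>} = Inl ` \<tau> \<union> Inr ` S"
    and h: "\<tau> = {} \<or> \<tau> \<in> J" "finite S" "S \<subseteq> K - J"
     "\<forall>\<sigma>\<in>S. \<tau> \<subseteq> \<sigma>" "\<tau> \<noteq> {} \<or> S \<noteq> {}"
    using assms by (rule rb_elim)
  have "Inl x \<in> Inl ` \<tau> \<union> Inr ` S" by (simp only: eq[symmetric]) simp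
  hence 1: "x \<in> \<tau>" by (auto simp: inj_image_mem_iff)
  have "Inr \<sigma> \<in> Inl ` \<tau> \<union> Inr ` S" by (simp only: eq[symmetric]) simp
  hence 2: "\<sigma> \<in> S" by (auto simp: inj_image_mem_iff)
  show ?thesis using 1 2 h by blast
qed
lemma embed_mem: "s \<in> embed_J J \<longleftrightarrow> (\<exists>t\<in>J. s = Inl ` t)"
  unfolding embed_J_def by blast

lemma sc_embed:
  assumes J: "simplicial_complex J"
  shows "simplicial_complex (embed_J J)"
  unfolding simplicial_complex_def
proof (rule conjI; intro ballI allI impI)
  fix s assume "s \<in> embed_J J"
  then obtain t where "t \<in> J" "s = Inl ` t" by (auto simp: embed_mem)
  thus "finite s \<and> s \<noteq> {}" using J unfolding simplicial_complex_def by auto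
next
  fix s u assume s: "s \<in> embed_J J" and u: "u \<subseteq> s \<and> u \<noteq> {}"
  then obtain t where t: "t \<in> J" "s = Inl ` t" by (auto simp: embed_mem)
  define v where "v = {a. Inl a \<in> u}"
  have "u = Inl ` v" using u t unfolding v_def by auto
  moreover have "v \<subseteq> t" "v \<noteq> {}" using u t unfolding v_def by auto
  ultimately show "u \<in> embed_J J" using t J unfolding simplicial_complex_def embed_mem by blast
qed
lemma rb_J:
  assumes "t \<in> J" "t \<noteq> {}"
  shows "Inl ` t \<in> rel_barycentric K J"
proof -
  have "Inl ` t = Inl ` t \<union> Inr ` {}" by simp
  thus ?thesis unfolding rel_barycentric_def mem_Collect_eq
    using assms by (intro exI[of _ t] exI[of _ "{}"]) simp
qed


lemma vert_embed: "u \<in> vertices (embed_J J) \<Longrightarrow> \<exists>x. u = Inl x \<and> x \<in> vertices J"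
  unfolding vertices_def embed_J_def by blast

lemma incl_embed:
  assumes "simplicial_complex J"
  shows "embed_J J \<subseteq> rel_barycentric K J"
proof
  fix s assume "s \<in> embed_J J"
  then obtain t where t: "t \<in> J" "s = Inl ` t" by (auto simp: embed_mem)
  have "t \<noteq> {}" using t assms unfolding simplicial_complex_def by auto
  thus "s \<in> rel_barycentric K J" using t rb_J by blast
qed

lemma full_embed: "full_in (embed_J J) (rel_barycentric K J)"
  unfolding full_in_def
proof (intro ballI impI)
  fix s assume s: "s \<in> rel_barycentric K J" and sv: "s \<subseteq> vertices (embed_J J)"
  obtain \<tau> S where eq: "s = Inl ` \<tau> \<union> Inr ` S" and h: "\<tau> = {} \<or> \<tau> \<in> J" "finite S" "S \<subseteq> K - J"
     "\<forall>\<sigma>\<in>S. \<tau> \<subseteq> \<sigma>" "\<tau> \<noteq> {} \<or> S \<noteq> {}"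
    using s by (rule rb_elim)
  have "S = {}"
  proof (rule equals0I)
    fix \<sigma> assume "\<sigma> \<in> S"
    hence "Inr \<sigma> \<in> s" using eq by simp
    hence "Inr \<sigma> \<in> vertices (embed_J J)" using sv by (rule subsetD[rotated])
    thus False using vert_embed by fastforce
  qed
  hence "s = Inl ` \<tau>" "\<tau> \<in> J" using eq h by auto
  thus "s \<in> embed_J J" by (auto simp: embed_mem)
qed

lemma pair_embed: "{x, z} \<in> J \<Longrightarrow> {Inl x, Inl z} \<in> embed_J J"
  unfolding embed_mem by (intro bexI[of _ "{x,z}"]) auto

lemma conv_embed:
  assumes K: "simplicial_complex K" and full: "full_in J K"
    and u: "u \<in> vertices (embed_J J)" and v: "v \<in> vertices (embed_J J)"
    and d: "dist2 (rel_barycentric K J) u v"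
    and e1: "is_edge (rel_barycentric K J) u w" and e2: "is_edge (rel_barycentric K J) w v"
    and incl: "embed_J J \<subseteq> rel_barycentric K J"
  shows "{u, w} \<in> embed_J J \<and> {w, v} \<in> embed_J J"
proof -
  obtain x where x: "u = Inl x" "x \<in> vertices J" using vert_embed[OF u] by blast
  obtain y where y: "v = Inl y" "y \<in> vertices J" using vert_embed[OF v] by blast
  have f1: "{Inl x, w} \<in> rel_barycentric K J" using e1 x by (simp add: is_edge_def)
  have f2: "{w, Inl y} \<in> rel_barycentric K J" using e2 y by (simp add: is_edge_def)
  show ?thesis
  proof (cases w)
    case (Inl z)
    have "{x, z} \<in> J" using edge_LL[OF f1[unfolded Inl]] .
    moreover have "{z, y} \<in> J" using edge_LL[OF f2[unfolded Inl]] .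
    ultimately have "{Inl x, Inl z} \<in> embed_J J" "{Inl z, Inl y} \<in> embed_J J"
      by (simp_all add: pair_embed)
    thus ?thesis by (simp add: x(1) y(1) Inl)
  next
    case (Inr \<sigma>)
    have a: "x \<in> \<sigma> \<and> \<sigma> \<in> K" using edge_LR[OF f1[unfolded Inr]] .
    have "{Inl y, Inr \<sigma>} \<in> rel_barycentric K J" using f2 Inr by (simp add: insert_commute)
    hence b: "y \<in> \<sigma> \<and> \<sigma> \<in> K" by (rule edge_LR)
    have sub: "{x, y} \<subseteq> \<sigma> \<and> {x, y} \<noteq> {}" using a b by simp
    have Kc: "\<forall>s\<in>K. \<forall>t. t \<subseteq> s \<and> t \<noteq> {} \<longrightarrow> t \<in> K" using K unfolding simplicial_complex_def by (rule conjunct2)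
    have "{x, y} \<in> K" using Kc a sub by blast
    moreover have "{x, y} \<subseteq> vertices J" using x y by simp
    ultimately have "{x, y} \<in> J" using full unfolding full_in_def by blast
    hence "{Inl x, Inl y} \<in> embed_J J" by (rule pair_embed)
    hence "{u, v} \<in> embed_J J" by (simp add: x(1) y(1))
    hence "{u, v} \<in> rel_barycentric K J" using incl by (rule subsetD[rotated])
    moreover have "u \<noteq> v" using d by (simp add: dist2_def)
    ultimately have "is_edge (rel_barycentric K J) u v" by (simp add: is_edge_def)
    thus ?thesis using d by (simp add: dist2_def)
  qed
qed

lemma main:
  assumes K: "simplicial_complex K" and sub: "subcomplex J K" and full: "full_in J K"
  shows "three_convex (embed_J J) (rel_barycentric K J)"
proof -
  have J: "simplicial_complex J" using sub by (simp add: subcomplex_def)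
  have incl: "embed_J J \<subseteq> rel_barycentric K J" using incl_embed[OF J] .
  have "subcomplex (embed_J J) (rel_barycentric K J)"
    unfolding subcomplex_def using sc_embed[OF J] incl by (rule conjI)
  moreover have "\<forall>u\<in>vertices (embed_J J). \<forall>v\<in>vertices (embed_J J). dist2 (rel_barycentric K J) u v \<longrightarrow>
        (\<forall>w. is_edge (rel_barycentric K J) u w \<and> is_edge (rel_barycentric K J) w v \<longrightarrow>
           {u, w} \<in> embed_J J \<and> {w, v} \<in> embed_J J)"
  proof (intro ballI impI allI)
    fix u v w
    assume "u \<in> vertices (embed_J J)" "v \<in> vertices (embed_J J)" "dist2 (rel_barycentric K J) u v"
      "is_edge (rel_barycentric K J) u w \<and> is_edge (rel_barycentric K J) w v"
    thus "{u, w} \<in> embed_J J \<and> {w, v} \<in> embed_J J"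
      using conv_embed[OF K full _ _ _ _ _ incl] by blast
  qed
  ultimately show ?thesis unfolding three_convex_def using full_embed by blast
qed

theorem lemma4p5:
  fixes K J :: "'a set set"
  assumes "simplicial_complex K"
  shows "(subcomplex J K \<and> flag J \<and> full_in J K \<longrightarrow>
            three_convex (embed_J J) (rel_barycentric K J)) \<and>
         (subcomplex J K \<and> flag K \<and> full_in J K \<longrightarrow>
            three_convex (embed_J J) (rel_barycentric K J))"
  using main[OF assms] by blast
end
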